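(* Fix an integer $l\ge -1$ and let $l_1=\lfloor\frac{l+1}{2}\rfloor$. Define \[H_l(x)=\sum_{k=-1}^{l}\ \sum_{\substack{\overline{x}\in\mathcal{Y}(k)\\ a(\overline{x})+b(\overline{x})-c(\overline{x})=2k+1-l}}\binom{x-3k-2}{k+1-a(\overline{x})-2b(\overline{x})},\] where $\binom{x-r}{s}$ denotes the polynomial $\frac{(x-r)(x-r-1)\cdots(x-r-s+1)}{s!}$ in $x$. Then $H_l(x)$ is a polynomial of degree $l_1$, and $l_1!\,H_l(x)$ is a monic polynomial with integer coefficients.
   Context: For $\overline{x}=(x_1,\ldots,x_t)\in\{1,2,3\}^t$ let $a(\overline{x})=\#\{i: x_i=2\}$, $b(\overline{x})=\#\{i: x_i=3\}$, and $c(\overline{x})=\#\{i\in[1,t]: \exists j_1,j_2\in[1,t],\ j_1+j_2=i,\ (x_{j_1},x_{j_2},x_i)=(1,1,2)\}$. For an integer $k\ge 0$, $\mathcal{Y}(k)$ is the set of tuples $\overline{x}\in\{1,2,3\}^{2k+1}$ such that (i) whenever $i_1,i_2,i_3\in[1,2k+1]$ satisfy $i_1+i_2=i_3$, $(x_{i_1},x_{i_2},x_{i_3})\ne(1,1,3)$, and (ii) $a(\overline{x})+2b(\overline{x})\le k+1$; $\mathcal{Y}(-1)=\{\emptyset\}$ consists of the empty tuple (with $a=b=c=0$). *)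

theory Defs
  imports "HOL-Computational_Algebra.Polynomial"
begin

text \<open>Tuples in {1,2,3}^t are lists; the paper's 1-based entry x_i is xs ! (i - 1).\<close>

definition cnt_a :: "nat list \<Rightarrow> nat" where
  "cnt_a xs = card {i \<in> {1..length xs}. xs ! (i - 1) = 2}"

definition cnt_b :: "nat list \<Rightarrow> nat" where
  "cnt_b xs = card {i \<in> {1..length xs}. xs ! (i - 1) = 3}"

definition cnt_c :: "nat list \<Rightarrow> nat" where
  "cnt_c xs = card {i \<in> {1..length xs}. \<exists>j1\<in>{1..length xs}. \<exists>j2\<in>{1..length xs}.
      j1 + j2 = i \<and> xs ! (j1 - 1) = 1 \<and> xs ! (j2 - 1) = 1 \<and> xs ! (i - 1) = 2}"

definition Yset :: "int \<Rightarrow> nat list set" where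
  "Yset k = (if k = -1 then {[]} else
     {xs. length xs = nat (2 * k + 1) \<and> set xs \<subseteq> {1, 2, 3} \<and>
          (\<forall>i1\<in>{1..length xs}. \<forall>i2\<in>{1..length xs}. \<forall>i3\<in>{1..length xs}.
              i1 + i2 = i3 \<longrightarrow>
              \<not> (xs ! (i1 - 1) = 1 \<and> xs ! (i2 - 1) = 1 \<and> xs ! (i3 - 1) = 3)) \<and>
          int (cnt_a xs) + 2 * int (cnt_b xs) \<le> k + 1})"

definition binom_poly :: "int \<Rightarrow> nat \<Rightarrow> rat poly" where
  "binom_poly r s = smult (1 / fact s) (\<Prod>i<s. [: - (of_int r + of_nat i), 1 :])"

definition H_poly :: "int \<Rightarrow> rat poly" where
  "H_poly l = (\<Sum>k\<in>{-1..l}. \<Sum>xs\<in>{xs \<in> Yset k.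
       int (cnt_a xs) + int (cnt_b xs) - int (cnt_c xs) = 2 * k + 1 - l}.
       binom_poly (3 * k + 2) (nat (k + 1 - int (cnt_a xs) - 2 * int (cnt_b xs))))"

end

theory Submission
  imports Defs
begin

lemma ints_coeff_mult:
  assumes "\<forall>i. coeff p i \<in> \<int>" "\<forall>i. coeff q i \<in> \<int>"
  shows "coeff (p * q) n \<in> (\<int> :: 'a::{comm_ring_1} set)"
  using assms by (simp add: coeff_mult Ints_sum Ints_mult)

lemma prodP:
  fixes r :: int
  shows "degree (\<Prod>i<s. [: - (of_int r + of_nat i), 1 :] :: rat poly) = s \<and>
         coeff (\<Prod>i<s. [: - (of_int r + of_nat i), 1 :] :: rat poly) s = 1 \<and>
         (\<forall>j. coeff (\<Prod>i<s. [: - (of_int r + of_nat i), 1 :] :: rat poly) j \<in> \<int>)"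
proof (induction s)
  case 0
  then show ?case by (auto simp: coeff_1 split: if_splits)
next
  case (Suc s)
  define P where "P = (\<Prod>i<s. [: - (of_int r + of_nat i), 1 :] :: rat poly)"
  define Q where "Q = ([: - (of_int r + of_nat s), 1 :] :: rat poly)"
  have e: "(\<Prod>i<Suc s. [: - (of_int r + of_nat i), 1 :] :: rat poly) = P * Q"
    by (simp add: P_def Q_def)
  have dP: "degree P = s" "coeff P s = 1" "\<forall>j. coeff P j \<in> \<int>" using Suc by (auto simp: P_def)
  have P0: "P \<noteq> 0" using dP by auto
  have dQ: "degree Q = 1" "Q \<noteq> 0" "coeff Q 1 = 1" by (auto simp: Q_def)
  have Qi: "\<forall>j. coeff Q j \<in> \<int>"
  proof
    fix j show "coeff Q j \<in> \<int>"
      by (cases j) (auto simp: Q_def coeff_pCons split: nat.splits)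
  qed
  have dPQ: "degree (P * Q) = Suc s" using degree_mult_eq[OF P0 dQ(2)] dP dQ by simp
  have "coeff (P * Q) (Suc s) = 1"
    using lead_coeff_mult[of P Q] dPQ dP dQ by simp
  then show ?case using e dPQ ints_coeff_mult[OF dP(3) Qi] by simp
qed

lemma binom_props:
  assumes "s \<le> m"
  shows "degree (binom_poly r s) = s \<and> coeff (binom_poly r s) s = 1 / fact s \<and>
         (\<forall>j. coeff (smult (fact m) (binom_poly r s)) j \<in> \<int>)"
proof -
  define P where "P = (\<Prod>i<s. [: - (of_int r + of_nat i), 1 :] :: rat poly)"
  have pp: "degree P = s" "coeff P s = 1" "\<forall>j. coeff P j \<in> \<int>" using prodP[of r s] by (auto simp: P_def)
  have b: "binom_poly r s = smult (1 / fact s) P" by (simp add: binom_poly_def P_def)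
  have "fact s dvd (fact m :: nat)" using fact_dvd[OF assms] .
  then obtain d :: nat where d: "fact m = fact s * d" by (auto elim: dvdE)
  have fr: "(fact m :: rat) = fact s * of_nat d"
    by (metis d of_nat_fact of_nat_mult)
  have "smult (fact m) (binom_poly r s) = smult (of_nat d) P"
    using b fr by (simp add: field_simps)
  moreover have "\<forall>j. coeff (smult (of_nat d) P) j \<in> \<int>" using pp(3) by (simp add: Ints_mult)
  ultimately show ?thesis using b pp by simp
qed

lemma Y_props:
  assumes "xs \<in> Yset k"
  shows "length xs = nat (2*k+1) \<and> set xs \<subseteq> {1,2,3} \<and> int (cnt_a xs) + 2 * int (cnt_b xs) \<le> k + 1"
proof (cases "k = -1")
  case True
  then have "xs = []" using assms by (simp add: Yset_def)
  then show ?thesis using True by (simp add: cnt_a_def cnt_b_def)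
next
  case False
  then show ?thesis using assms by (simp add: Yset_def)
qed

lemma Yset_finite: "finite (Yset k)"
proof -
  have "Yset k \<subseteq> {xs. set xs \<subseteq> {1,2,3} \<and> length xs = nat (2*k+1)}"
    using Y_props by blast
  moreover have "finite {xs. set xs \<subseteq> {1::nat,2,3} \<and> length xs = nat (2*k+1)}"
    by (rule finite_lists_length_eq) simp
  ultimately show ?thesis by (rule finite_subset)
qed

lemma cnt_a0: "cnt_a xs = 0 \<Longrightarrow> i < length xs \<Longrightarrow> xs ! i \<noteq> 2"
proof
  assume "cnt_a xs = 0" "i < length xs" "xs ! i = 2"
  then have "Suc i \<in> {i \<in> {1..length xs}. xs ! (i - 1) = 2}" by auto
  moreover have "finite {i \<in> {1..length xs}. xs ! (i - 1) = 2}" by simp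
  ultimately show False using \<open>cnt_a xs = 0\<close> unfolding cnt_a_def by (metis card_0_eq empty_iff)
qed

lemma cnt_b0: "cnt_b xs = 0 \<Longrightarrow> i < length xs \<Longrightarrow> xs ! i \<noteq> 3"
proof
  assume "cnt_b xs = 0" "i < length xs" "xs ! i = 3"
  then have "Suc i \<in> {i \<in> {1..length xs}. xs ! (i - 1) = 3}" by auto
  moreover have "finite {i \<in> {1..length xs}. xs ! (i - 1) = 3}" by simp
  ultimately show False using \<open>cnt_b xs = 0\<close> unfolding cnt_b_def by (metis card_0_eq empty_iff)
qed

lemma c_le_a: "cnt_c xs \<le> cnt_a xs"
  unfolding cnt_c_def cnt_a_def by (rule card_mono) auto

lemma entry1: "set (xs::nat list) \<subseteq> {1,2,3} \<Longrightarrow> i < length xs \<Longrightarrow> xs ! i \<noteq> 2 \<Longrightarrow> xs ! i \<noteq> 3 \<Longrightarrow> xs ! i = 1"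
proof -
  assume a: "set xs \<subseteq> {1,2,3}" "i < length xs" "xs ! i \<noteq> 2" "xs ! i \<noteq> 3"
  have "xs ! i \<in> set xs" using a(2) by simp
  then have "xs ! i \<in> {1,2,3}" using a(1) by blast
  then show "xs ! i = 1" using a(3,4) by blast
qed

lemma cnts_rep: "cnt_a (replicate n 1) = 0" "cnt_b (replicate n 1) = 0" "cnt_c (replicate n 1) = 0"
  unfolding cnt_a_def cnt_b_def cnt_c_def by auto

lemma cnts_2rep: "cnt_a (2 # replicate n 1) = 1" "cnt_b (2 # replicate n 1) = 0" "cnt_c (2 # replicate n 1) = 0"
proof -
  have "{i \<in> {1..length (2 # replicate n 1)}. (2 # replicate n (1::nat)) ! (i - 1) = 2} = {1::nat}"
    by (auto simp: nth_Cons')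
  then show "cnt_a (2 # replicate n 1) = 1" unfolding cnt_a_def by simp
  show "cnt_b (2 # replicate n 1) = 0" unfolding cnt_b_def by (auto simp: nth_Cons')
  show "cnt_c (2 # replicate n 1) = 0" unfolding cnt_c_def by (auto simp: nth_Cons')
qed

lemma Yset_intro:
  assumes "k \<noteq> -1" "length xs = nat (2*k+1)" "set xs \<subseteq> {1,2,3}"
    "\<forall>i<length xs. xs ! i \<noteq> 3" "int (cnt_a xs) + 2 * int (cnt_b xs) \<le> k + 1"
  shows "xs \<in> Yset k"
proof -
  have "\<forall>i1\<in>{1..length xs}. \<forall>i2\<in>{1..length xs}. \<forall>i3\<in>{1..length xs}.
              i1 + i2 = i3 \<longrightarrow>
              \<not> (xs ! (i1 - 1) = 1 \<and> xs ! (i2 - 1) = 1 \<and> xs ! (i3 - 1) = 3)"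
  proof (intro ballI impI)
    fix i1 i2 i3 assume "i3 \<in> {1..length xs}"
    then have "i3 - 1 < length xs" by auto
    then show "\<not> (xs ! (i1 - 1) = 1 \<and> xs ! (i2 - 1) = 1 \<and> xs ! (i3 - 1) = 3)"
      using assms(4) by blast
  qed
  then show ?thesis using assms unfolding Yset_def by simp
qed

lemma set_rep1: "set (replicate n (Suc 0)) \<subseteq> {Suc 0,2,3}"
  by (induct n) auto

definition xs0 :: "int \<Rightarrow> nat list" where
  "xs0 l = (if odd l then replicate (nat l) 1 else 2 # replicate (nat l) 1)"

lemma xs0_good:
  assumes "l \<ge> -1"
  shows "xs0 l \<in> Yset (l div 2) \<and>
    int (cnt_a (xs0 l)) + int (cnt_b (xs0 l)) - int (cnt_c (xs0 l)) = 2 * (l div 2) + 1 - l \<and>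
    nat (l div 2 + 1 - int (cnt_a (xs0 l)) - 2 * int (cnt_b (xs0 l))) = nat ((l + 1) div 2)"
proof (cases "odd l")
  case True
  show ?thesis
  proof (cases "l = -1")
    case True
    then show ?thesis by (simp add: xs0_def Yset_def cnt_a_def cnt_b_def cnt_c_def)
  next
    case False
    then have "l div 2 \<noteq> -1" using assms \<open>odd l\<close> by presburger
    have e0: "2 * (l div 2) + 1 = l" using True by presburger
    have e1: "nat (2 * (l div 2) + 1) = nat l" using e0 by simp
    have e2: "2 * (l div 2) + 1 - l = 0" using True by presburger
    have e3: "l div 2 + 1 = (l + 1) div 2" using True by presburger
    have x: "xs0 l = replicate (nat l) 1" using True by (simp add: xs0_def)
    have "xs0 l \<in> Yset (l div 2)"
      unfolding x using \<open>l div 2 \<noteq> -1\<close> e1 cnts_rep assms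
      by (intro Yset_intro) (simp_all add: set_rep1)
    then show ?thesis using e2 e3 x cnts_rep by simp
  qed
next
  case False
  then have "l \<ge> 0" using assms by presburger
  then have "l div 2 \<noteq> -1" by presburger
  have e0: "2 * (l div 2) + 1 = l + 1" using False by presburger
  have e1: "nat (2 * (l div 2) + 1) = Suc (nat l)" using e0 \<open>l \<ge> 0\<close> by simp
  have e2: "2 * (l div 2) + 1 - l = 1" using False by presburger
  have e3: "l div 2 = (l + 1) div 2" using False by presburger
  have x: "xs0 l = 2 # replicate (nat l) 1" using False by (simp add: xs0_def)
  have "xs0 l \<in> Yset (l div 2)"
    unfolding x using \<open>l div 2 \<noteq> -1\<close> e1 cnts_2rep \<open>l \<ge> 0\<close>
    by (intro Yset_intro) (simp_all add: nth_Cons' set_rep1)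
  then show ?thesis using e2 e3 x cnts_2rep by simp
qed

lemma div2_help: "2 * (s::int) \<le> m \<Longrightarrow> s \<le> m div 2"
  by presburger

lemma sv_bound:
  assumes "xs \<in> Yset k" "int (cnt_a xs) + int (cnt_b xs) - int (cnt_c xs) = 2 * k + 1 - l"
  shows "k + 1 - int (cnt_a xs) - 2 * int (cnt_b xs) \<ge> 0"
    and "nat (k + 1 - int (cnt_a xs) - 2 * int (cnt_b xs)) \<le> nat ((l + 1) div 2)"
proof -
  have p: "int (cnt_a xs) + 2 * int (cnt_b xs) \<le> k + 1" using Y_props[OF assms(1)] by blast
  then show "k + 1 - int (cnt_a xs) - 2 * int (cnt_b xs) \<ge> 0" by simp
  have "2 * (k + 1 - int (cnt_a xs) - 2 * int (cnt_b xs)) \<le> l + 1" using assms(2) by simp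
  then have "k + 1 - int (cnt_a xs) - 2 * int (cnt_b xs) \<le> (l + 1) div 2" by (rule div2_help)
  then show "nat (k + 1 - int (cnt_a xs) - 2 * int (cnt_b xs)) \<le> nat ((l + 1) div 2)" by simp
qed

lemma sv_eq:
  assumes "xs \<in> Yset k" "int (cnt_a xs) + int (cnt_b xs) - int (cnt_c xs) = 2 * k + 1 - l"
    and "nat (k + 1 - int (cnt_a xs) - 2 * int (cnt_b xs)) = nat ((l + 1) div 2)"
    and "l \<ge> -1"
  shows "k = l div 2 \<and> xs = xs0 l"
proof -
  define a where "a = cnt_a xs"
  define b where "b = cnt_b xs"
  define c where "c = cnt_c xs"
  have Y: "length xs = nat (2*k+1)" "set xs \<subseteq> {1,2,3}" "int a + 2 * int b \<le> k + 1"
    using Y_props[OF assms(1)] by (auto simp: a_def b_def)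
  have cond: "int a + int b - int c = 2 * k + 1 - l" using assms(2) by (simp add: a_def b_def c_def)
  have s: "k + 1 - int a - 2 * int b = (l + 1) div 2"
  proof -
    have "(l + 1) div 2 \<ge> 0" using assms(4) by simp
    then show ?thesis using assms(3) Y(3) by (simp add: a_def b_def eq_nat_nat_iff)
  qed
  have ca: "c \<le> a" using c_le_a by (simp add: a_def c_def)
  have m: "l + 1 = 2 * ((l + 1) div 2) + (l + 1) mod 2" by simp
  have sm: "int a + 3 * int b + int c = (l + 1) mod 2" using s cond m by linarith
  have kk: "2 * k + 1 = l + int a + int b - int c" using cond by linarith
  show ?thesis
  proof (cases "odd l")
    case True
    have "(l + 1) mod 2 = 0" using True by presburger
    then have abc: "a = 0" "b = 0" "c = 0" using sm by linarith+
    have k2: "2 * k + 1 = l" using kk abc by simp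
    then have k: "k = l div 2" by presburger
    have len: "length xs = nat l" using Y(1) k2 by simp
    have "xs = replicate (nat l) 1"
    proof (rule nth_equalityI)
      show "length xs = length (replicate (nat l) 1)" using len by simp
      fix i assume "i < length xs"
      then show "xs ! i = replicate (nat l) 1 ! i"
        using entry1[OF Y(2)] cnt_a0[of xs i] cnt_b0[of xs i] abc len
        by (simp add: a_def b_def)
    qed
    then show ?thesis using k True by (simp add: xs0_def)
  next
    case False
    have "(l + 1) mod 2 = 1" using False by presburger
    then have sm1: "a + 3 * b + c = 1" using sm by linarith
    then have abc: "a = 1" "b = 0" "c = 0" using ca by arith+
    have k2: "2 * k + 1 = l + 1" using kk abc by simp
    then have k: "k = l div 2" by presburger
    have l0: "l \<ge> 0" using False assms(4) by presburger
    have len: "length xs = Suc (nat l)" using Y(1) k2 l0 by (simp add: nat_add_distrib)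
    let ?A = "{i \<in> {1..length xs}. xs ! (i - 1) = 2}"
    have "card ?A = 1" using abc by (simp add: a_def cnt_a_def)
    then obtain i0 where i0: "?A = {i0}" by (rule card_1_singletonE)
    have not2: "xs ! j \<noteq> 2" if "j < length xs" "j \<noteq> i0 - 1" for j
    proof
      assume "xs ! j = 2"
      then have "Suc j \<in> ?A" using that by auto
      then have "Suc j = i0" using i0 by blast
      then show False using that by simp
    qed
    have i0r: "i0 \<ge> 1" "i0 \<le> length xs" "xs ! (i0 - 1) = 2" using i0 by auto
    have one: "xs ! j = 1" if "j < length xs" "j \<noteq> i0 - 1" for j
      using entry1[OF Y(2) that(1) not2[OF that]] cnt_b0[of xs j] abc that by (simp add: b_def)
    have i01: "i0 = 1"
    proof (rule ccontr)
      assume "i0 \<noteq> 1"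
      then have ge: "i0 \<ge> 2" using i0r by simp
      let ?C = "{i \<in> {1..length xs}. \<exists>j1\<in>{1..length xs}. \<exists>j2\<in>{1..length xs}.
      j1 + j2 = i \<and> xs ! (j1 - 1) = 1 \<and> xs ! (j2 - 1) = 1 \<and> xs ! (i - 1) = 2}"
      have "xs ! 0 = 1" using one[of 0] ge i0r by (cases xs) auto
      have "xs ! (i0 - 1 - 1) = 1" using one[of "i0 - 1 - 1"] ge i0r by simp
      note this \<open>xs ! 0 = 1\<close>
      then have j: "\<exists>j1\<in>{1..length xs}. \<exists>j2\<in>{1..length xs}.
          j1 + j2 = i0 \<and> xs ! (j1 - 1) = 1 \<and> xs ! (j2 - 1) = 1 \<and> xs ! (i0 - 1) = 2"
        using ge i0r
        apply -
        apply (rule bexI[where x=1])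
         apply (rule bexI[where x="i0 - 1"])
        by (simp_all, arith)
      have "i0 \<in> ?C" using j i0r by simp
      moreover have "finite ?C" by simp
      ultimately have "card ?C \<noteq> 0" using card_0_eq[of ?C] by blast
      then have "c \<noteq> 0" unfolding c_def cnt_c_def .
      then show False using abc by simp
    qed
    have "xs = 2 # replicate (nat l) 1"
    proof (rule nth_equalityI)
      show "length xs = length (2 # replicate (nat l) 1)" using len by simp
      fix i assume "i < length xs"
      then show "xs ! i = (2 # replicate (nat l) 1) ! i"
        using one[of i] i0r i01 len by (cases i) auto
    qed
    then show ?thesis using k False by (simp add: xs0_def)
  qed
qed

theorem proposition8p11:
  fixes l :: int
  assumes "l \<ge> -1"
  shows "degree (H_poly l) = nat ((l + 1) div 2) \<and>
         lead_coeff (smult (fact (nat ((l + 1) div 2))) (H_poly l)) = 1 \<and>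
         (\<forall>i. coeff (smult (fact (nat ((l + 1) div 2))) (H_poly l)) i \<in> \<int>)"
proof -
  define l1 where "l1 = nat ((l + 1) div 2)"
  define A where "A k = {xs \<in> Yset k. int (cnt_a xs) + int (cnt_b xs) - int (cnt_c xs) = 2 * k + 1 - l}" for k
  define sv where "sv k xs = nat (k + 1 - int (cnt_a xs) - 2 * int (cnt_b xs))" for k xs
  define T where "T k xs = binom_poly (3 * k + 2) (sv k xs)" for k xs
  have H: "H_poly l = (\<Sum>k\<in>{-1..l}. \<Sum>xs\<in>A k. T k xs)"
    by (simp add: H_poly_def A_def T_def sv_def)
  have finA: "finite (A k)" for k
    unfolding A_def using Yset_finite by simp
  have svle: "sv k xs \<le> l1" if "xs \<in> A k" for k xs
    using sv_bound(2)[of xs k l] that by (simp add: A_def sv_def l1_def)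
  have Tp: "degree (T k xs) = sv k xs \<and> coeff (T k xs) (sv k xs) = 1 / fact (sv k xs) \<and>
      (\<forall>j. coeff (smult (fact l1) (T k xs)) j \<in> \<int>)" if "xs \<in> A k" for k xs
    unfolding T_def using binom_props[OF svle[OF that]] by blast
  define k0 where "k0 = l div 2"
  have k0a: "-1 \<le> k0" "k0 \<le> l" using assms unfolding k0_def by presburger+
  have k0: "k0 \<in> {-1..l}" using k0a by simp
  have x0: "xs0 l \<in> A k0" "sv k0 (xs0 l) = l1"
    using xs0_good[OF assms] by (auto simp: A_def k0_def sv_def l1_def)
  have uniq: "k = k0 \<and> xs = xs0 l" if "xs \<in> A k" "sv k xs = l1" for k xs
    using sv_eq[of xs k l] that assms by (simp add: A_def sv_def l1_def k0_def)
  have cT: "coeff (T k xs) l1 = (if k = k0 \<and> xs = xs0 l then 1 / fact l1 else 0)"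
    if "xs \<in> A k" for k xs
  proof (cases "sv k xs = l1")
    case True
    then show ?thesis using uniq[OF that] Tp[OF that] by simp
  next
    case False
    then have "sv k xs < l1" using svle[OF that] by simp
    then have "coeff (T k xs) l1 = 0" using Tp[OF that] by (simp add: coeff_eq_0)
    moreover have "\<not> (k = k0 \<and> xs = xs0 l)" using False x0 by auto
    ultimately show ?thesis by simp
  qed
  have inner: "(\<Sum>xs\<in>A k. coeff (T k xs) l1) = (if k = k0 then 1 / fact l1 else 0)" for k
  proof -
    have "(\<Sum>xs\<in>A k. coeff (T k xs) l1) = (\<Sum>xs\<in>A k. if k = k0 \<and> xs = xs0 l then 1 / fact l1 else 0)"
      using cT by (rule sum.cong[OF refl])
    also have "\<dots> = (if k = k0 then 1 / fact l1 else 0)"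
    proof (cases "k = k0")
      case True
      then show ?thesis using x0(1) finA[of k] by (simp add: sum.delta')
    next
      case False
      then show ?thesis by simp
    qed
    finally show ?thesis .
  qed
  have cH: "coeff (H_poly l) l1 = 1 / fact l1"
    unfolding H by (simp add: coeff_sum inner k0a)
  have dle: "degree (H_poly l) \<le> l1"
    unfolding H
    by (intro degree_sum_le finite_atLeastAtMost_int finA) (use Tp svle in fastforce)+
  have dH: "degree (H_poly l) = l1"
    using dle le_degree[of "H_poly l" l1] cH by simp
  have lc: "lead_coeff (smult (fact l1) (H_poly l)) = 1"
    using dH cH by simp
  have ints: "coeff (smult (fact l1) (H_poly l)) i \<in> \<int>" for i
  proof -
    have "coeff (smult (fact l1) (H_poly l)) i = (\<Sum>k\<in>{-1..l}. \<Sum>xs\<in>A k. coeff (smult (fact l1) (T k xs)) i)"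
      unfolding H by (simp add: coeff_sum sum_distrib_left)
    also have "\<dots> \<in> \<int>" using Tp by (intro Ints_sum) blast
    finally show ?thesis .
  qed
  show ?thesis using dH lc ints by (simp add: l1_def)
qed
end
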